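(* Let $X$ be a set, $U\subset 2^X$ a non-empty family of subsets and $\mu:U\to B_2$ a function. (a) If $U$ is closed under $\Delta$ and $\cap$, then the following are equivalent: (a.1) for all $A,B\in U$, $A\cap B=\emptyset$ implies $\mu(A\cup B)=\mu(A)\oplus\mu(B)$; (a.2) for all $A,B\in U$, $\mu(A\Delta B)=\mu(A)\oplus\mu(B)$. (b) If $U$ is closed under $\Theta$ and $\cup$, then the following are equivalent: (b.1) for all $A,B\in U$, $A\cup B=X$ implies $\mu(A\cap B)=\mu(A)\otimes\mu(B)$; (b.2) for all $A,B\in U$, $\mu(A\Theta B)=\mu(A)\otimes\mu(B)$.
   Context: $B_2=\{0,1\}$. On $B_2$, $\oplus$ is addition modulo 2 ($x\oplus y=1$ iff $x\neq y$) and $\otimes$ is the coincidence ($x\otimes y=1$ iff $x=y$). For subsets of $X$, $\Delta$ is the symmetric difference and $A\Theta B=X-(A\Delta B)$. *)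

theory Defs
  imports Main
begin

text \<open>B_2 = {0,1} is modelled by bool (0 = False, 1 = True).\<close>

definition b2_plus :: "bool \<Rightarrow> bool \<Rightarrow> bool" where
  "b2_plus x y = (x \<noteq> y)"

definition b2_times :: "bool \<Rightarrow> bool \<Rightarrow> bool" where
  "b2_times x y = (x = y)"

definition sym_diff :: "'a set \<Rightarrow> 'a set \<Rightarrow> 'a set" where
  "sym_diff A B = (A - B) \<union> (B - A)"

definition Theta :: "'a set \<Rightarrow> 'a set \<Rightarrow> 'a set \<Rightarrow> 'a set" where
  "Theta X A B = X - sym_diff A B"

end

theory Submission
  imports Defs
begin

theorem theorem2p1:
  fixes X :: "'a set" and U :: "'a set set" and \<mu> :: "'a set \<Rightarrow> bool"
  assumes "U \<subseteq> Pow X" and "U \<noteq> {}"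
  shows "((\<forall>A\<in>U. \<forall>B\<in>U. sym_diff A B \<in> U \<and> A \<inter> B \<in> U) \<longrightarrow>
            ((\<forall>A\<in>U. \<forall>B\<in>U. A \<inter> B = {} \<longrightarrow> \<mu> (A \<union> B) = b2_plus (\<mu> A) (\<mu> B))
             \<longleftrightarrow> (\<forall>A\<in>U. \<forall>B\<in>U. \<mu> (sym_diff A B) = b2_plus (\<mu> A) (\<mu> B))))
       \<and> ((\<forall>A\<in>U. \<forall>B\<in>U. Theta X A B \<in> U \<and> A \<union> B \<in> U) \<longrightarrow>
            ((\<forall>A\<in>U. \<forall>B\<in>U. A \<union> B = X \<longrightarrow> \<mu> (A \<inter> B) = b2_times (\<mu> A) (\<mu> B))
             \<longleftrightarrow> (\<forall>A\<in>U. \<forall>B\<in>U. \<mu> (Theta X A B) = b2_times (\<mu> A) (\<mu> B))))"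
proof (intro conjI impI; rule iffI; intro ballI impI)
  fix A B
  assume cl: "\<forall>A\<in>U. \<forall>B\<in>U. sym_diff A B \<in> U \<and> A \<inter> B \<in> U"
    and h: "\<forall>A\<in>U. \<forall>B\<in>U. A \<inter> B = {} \<longrightarrow> \<mu> (A \<union> B) = b2_plus (\<mu> A) (\<mu> B)"
    and A: "A \<in> U" and B: "B \<in> U"
  have I: "A \<inter> B \<in> U" using cl A B by blast
  have "sym_diff A (A \<inter> B) = A - B" by (auto simp: sym_diff_def)
  then have AB: "A - B \<in> U" using cl A I by metis
  have "sym_diff B (A \<inter> B) = B - A" by (auto simp: sym_diff_def)
  then have BA: "B - A \<in> U" using cl B I by metis
  have e1: "\<mu> A = b2_plus (\<mu> (A - B)) (\<mu> (A \<inter> B))"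
    proof -
    have "(A - B) \<inter> (A \<inter> B) = {}" "(A - B) \<union> (A \<inter> B) = A" by auto
    then show ?thesis using h AB I by metis
  qed
  have e2: "\<mu> B = b2_plus (\<mu> (B - A)) (\<mu> (A \<inter> B))"
    proof -
    have "(B - A) \<inter> (A \<inter> B) = {}" "(B - A) \<union> (A \<inter> B) = B" by auto
    then show ?thesis using h BA I by metis
  qed
  have e3: "\<mu> (sym_diff A B) = b2_plus (\<mu> (A - B)) (\<mu> (B - A))"
    proof -
    have "(A - B) \<inter> (B - A) = {}" "(A - B) \<union> (B - A) = sym_diff A B" by (auto simp: sym_diff_def)
    then show ?thesis using h AB BA by metis
  qed
  show "\<mu> (sym_diff A B) = b2_plus (\<mu> A) (\<mu> B)"
    using e1 e2 e3 by (auto simp: b2_plus_def)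
next
  fix A B
  assume h: "\<forall>A\<in>U. \<forall>B\<in>U. \<mu> (sym_diff A B) = b2_plus (\<mu> A) (\<mu> B)"
    and A: "A \<in> U" and B: "B \<in> U" and d: "A \<inter> B = {}"
  have "sym_diff A B = A \<union> B" using d by (auto simp: sym_diff_def)
  then show "\<mu> (A \<union> B) = b2_plus (\<mu> A) (\<mu> B)" using h A B by metis
next
  fix A B
  assume cl: "\<forall>A\<in>U. \<forall>B\<in>U. Theta X A B \<in> U \<and> A \<union> B \<in> U"
    and h: "\<forall>A\<in>U. \<forall>B\<in>U. A \<union> B = X \<longrightarrow> \<mu> (A \<inter> B) = b2_times (\<mu> A) (\<mu> B)"
    and A: "A \<in> U" and B: "B \<in> U"
  have AX: "A \<subseteq> X" and BX: "B \<subseteq> X" using assms(1) A B by auto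
  have U: "A \<union> B \<in> U" using cl A B by blast
  have P: "A \<union> (X - B) \<in> U"
  proof -
    have "Theta X A (A \<union> B) = A \<union> (X - B)" using AX BX by (auto simp: Theta_def sym_diff_def)
    then show ?thesis using cl A U by metis
  qed
  have Q: "B \<union> (X - A) \<in> U"
  proof -
    have "Theta X B (A \<union> B) = B \<union> (X - A)" using AX BX by (auto simp: Theta_def sym_diff_def)
    then show ?thesis using cl B U by metis
  qed
  have e1: "\<mu> A = b2_times (\<mu> (A \<union> B)) (\<mu> (A \<union> (X - B)))"
  proof -
    have "(A \<union> B) \<union> (A \<union> (X - B)) = X" "(A \<union> B) \<inter> (A \<union> (X - B)) = A" using AX BX by auto
    then show ?thesis using h U P by metis
  qed
  have e2: "\<mu> B = b2_times (\<mu> (A \<union> B)) (\<mu> (B \<union> (X - A)))"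
  proof -
    have "(A \<union> B) \<union> (B \<union> (X - A)) = X" "(A \<union> B) \<inter> (B \<union> (X - A)) = B" using AX BX by auto
    then show ?thesis using h U Q by metis
  qed
  have e3: "\<mu> (Theta X A B) = b2_times (\<mu> (A \<union> (X - B))) (\<mu> (B \<union> (X - A)))"
  proof -
    have "(A \<union> (X - B)) \<union> (B \<union> (X - A)) = X"
      "(A \<union> (X - B)) \<inter> (B \<union> (X - A)) = Theta X A B" using AX BX by (auto simp: Theta_def sym_diff_def)
    then show ?thesis using h P Q by metis
  qed
  show "\<mu> (Theta X A B) = b2_times (\<mu> A) (\<mu> B)"
    using e1 e2 e3 by (auto simp: b2_times_def)
next
  fix A B
  assume h: "\<forall>A\<in>U. \<forall>B\<in>U. \<mu> (Theta X A B) = b2_times (\<mu> A) (\<mu> B)"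
    and A: "A \<in> U" and B: "B \<in> U" and d: "A \<union> B = X"
  have "Theta X A B = A \<inter> B" using d by (auto simp: Theta_def sym_diff_def)
  then show "\<mu> (A \<inter> B) = b2_times (\<mu> A) (\<mu> B)" using h A B by metis
qed

end
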